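(* Let $q\ge 1$ and $n$ be integers with $n\ge q-1$, let $a_1,\dots,a_n\in\mathbb{Z}_q$ be reduced residues (i.e. $\gcd(a_i,q)=1$ for all $i$), and let $\rho\in\mathbb{Z}_q$. Then the number of the $2^n$ choices $(\varepsilon_1,\dots,\varepsilon_n)\in\{0,1\}^n$ for which $\sum_{i=1}^n\varepsilon_i a_i\equiv\rho\pmod q$ is at least $\binom{n}{\lceil (n-q)/2\rceil}_q$. Moreover, this bound is best possible: for all such $q,n$ there exist reduced residues $a_1,\dots,a_n$ and a residue $\rho$ for which equality holds.
   Context: $\mathbb{Z}_q$ denotes the integers modulo $q$. For an integer $s$, the mod $q$ binomial coefficient is $\binom{n}{s}_q=|\{A\subseteq\{1,\dots,n\}: |A|\equiv s \pmod q\}|=\sum_{j\equiv s\ (\mathrm{mod}\ q),\,0\le j\le n}\binom{n}{j}$. *)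

theory Defs
  imports Complex_Main "HOL-Library.FuncSet" "HOL-Number_Theory.Cong"
begin

definition binom_mod :: "nat \<Rightarrow> int \<Rightarrow> nat \<Rightarrow> nat" where
  "binom_mod n s q = (\<Sum>j\<in>{j. j \<le> n \<and> [int j = s] (mod int q)}. n choose j)"

definition sol_count :: "nat \<Rightarrow> nat \<Rightarrow> (nat \<Rightarrow> int) \<Rightarrow> int \<Rightarrow> nat" where
  "sol_count q n a \<rho> =
     card {\<epsilon> \<in> {..<n} \<rightarrow>\<^sub>E {0, 1::int}. [(\<Sum>i<n. \<epsilon> i * a i) = \<rho>] (mod int q)}"

end

theory Submission imports Defs begin

fun cnt :: "nat \<Rightarrow> nat \<Rightarrow> (nat \<Rightarrow> int) \<Rightarrow> int \<Rightarrow> nat" where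
  "cnt q 0 a x = (if [0 = x] (mod int q) then 1 else 0)"
| "cnt q (Suc n) a x = cnt q n a x + cnt q n a (x - a n)"

lemma sum_upd: "(\<Sum>i<(n::nat). (g(n := b)) i * a i) = (\<Sum>i<n. g i * a i)"
  proof (rule sum.cong)
  fix i assume "i \<in> {..<n}"
  then have "i \<noteq> n" by simp
  then show "(g(n := b)) i * a i = g i * a i" by simp
qed simp

lemma sol_count_Suc:
  "sol_count q (Suc n) a x = sol_count q n a x + sol_count q n a (x - a n)"
proof -
  define S where "S = {\<epsilon> \<in> {..<Suc n} \<rightarrow>\<^sub>E {0, 1::int}. [(\<Sum>i<Suc n. \<epsilon> i * a i) = x] (mod int q)}"
  define T0 where "T0 = {\<epsilon> \<in> {..<n} \<rightarrow>\<^sub>E {0, 1::int}. [(\<Sum>i<n. \<epsilon> i * a i) = x] (mod int q)}"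
  define T1 where "T1 = {\<epsilon> \<in> {..<n} \<rightarrow>\<^sub>E {0, 1::int}. [(\<Sum>i<n. \<epsilon> i * a i) = x - a n] (mod int q)}"
  have c1: "[s + a n = x] (mod int q) \<longleftrightarrow> [s = x - a n] (mod int q)" for s
    by (simp add: cong_iff_dvd_diff algebra_simps)
  have "S = (\<lambda>g. g(n:=0)) ` T0 \<union> (\<lambda>g. g(n:=1)) ` T1"
  proof
    show "S \<subseteq> (\<lambda>g. g(n:=0)) ` T0 \<union> (\<lambda>g. g(n:=1)) ` T1"
    proof
      fix e assume e: "e \<in> S"
      define g where "g = e(n := undefined)"
      have gE: "g \<in> {..<n} \<rightarrow>\<^sub>E {0, 1::int}" using e unfolding S_def g_def PiE_def extensional_def by auto
      have en: "e n \<in> {0,1}" using e unfolding S_def by auto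
      have sm: "(\<Sum>i<Suc n. e i * a i) = (\<Sum>i<n. g i * a i) + e n * a n"
        unfolding g_def using sum_upd[where n=n and g=e and b=undefined and a=a] by simp
      have eq: "e = g(n := e n)" unfolding g_def by simp
      show "e \<in> (\<lambda>g. g(n:=0)) ` T0 \<union> (\<lambda>g. g(n:=1)) ` T1"
      proof (cases "e n = 0")
        case True
        then have "g \<in> T0" using e gE sm unfolding S_def T0_def by auto
        then show ?thesis using eq True by auto
      next
        case False
        then have "e n = 1" using en by auto
        then have "g \<in> T1" using e gE sm c1 unfolding S_def T1_def by auto
        then show ?thesis using eq \<open>e n = 1\<close> by auto
      qed
    qed
  next
    show "(\<lambda>g. g(n:=0)) ` T0 \<union> (\<lambda>g. g(n:=1)) ` T1 \<subseteq> S"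
    proof
      fix e assume "e \<in> (\<lambda>g. g(n:=0)) ` T0 \<union> (\<lambda>g. g(n:=1)) ` T1"
      then obtain g b where gb: "e = g(n := b)" "b \<in> {0,1}" "g \<in> {..<n} \<rightarrow>\<^sub>E {0, 1::int}"
        "[(\<Sum>i<n. g i * a i) + b * a n = x] (mod int q)"
        unfolding T0_def T1_def using c1 by auto
      have "e \<in> {..<Suc n} \<rightarrow>\<^sub>E {0, 1::int}" using gb unfolding PiE_def extensional_def Pi_def
        by (auto simp: less_Suc_eq)
      moreover have "(\<Sum>i<Suc n. e i * a i) = (\<Sum>i<n. g i * a i) + b * a n"
        using gb(1) sum_upd[where n=n and g=g and b=b and a=a] by simp
      ultimately show "e \<in> S" using gb unfolding S_def by auto
    qed
  qed
  moreover have injb: "inj_on (\<lambda>g. g(n:=b)) ({..<n} \<rightarrow>\<^sub>E {0, 1::int})" for b :: int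
  proof (rule inj_onI)
    fix g h assume g: "g \<in> {..<n} \<rightarrow>\<^sub>E {0, 1::int}" and h: "h \<in> {..<n} \<rightarrow>\<^sub>E {0, 1::int}"
        and eq: "g(n := b) = h(n := b)"
      show "g = h"
      proof (rule ext)
        fix i show "g i = h i"
        proof (cases "i = n")
          case True
          then show ?thesis using PiE_arb[OF g, of n] PiE_arb[OF h, of n] by simp
        next
          case False
          then show ?thesis using fun_cong[OF eq, of i] by simp
        qed
      qed
  qed
  have "inj_on (\<lambda>g. g(n:=0)) T0" unfolding T0_def by (rule inj_on_subset[OF injb]) auto
  moreover have "inj_on (\<lambda>g. g(n:=1)) T1" unfolding T1_def by (rule inj_on_subset[OF injb]) auto
  moreover have "finite T0" "finite T1" unfolding T0_def T1_def
    by (auto intro!: finite_PiE)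
  moreover have "(\<lambda>g. g(n:=0)) ` T0 \<inter> (\<lambda>g. g(n:=1)) ` T1 = {}"
  proof -
    { fix e assume e0: "e \<in> (\<lambda>g. g(n:=0)) ` T0" and e1: "e \<in> (\<lambda>g. g(n:=1)) ` T1"
      have "e n = 0" using e0 by auto
      moreover have "e n = 1" using e1 by auto
      ultimately
      have False by simp }
    then show ?thesis by blast
  qed
  ultimately have "card S = card T0 + card T1"
    by (simp add: card_Un_disjoint card_image)
  then show ?thesis unfolding sol_count_def S_def T0_def T1_def by simp
qed

lemma sol_count_cnt: "sol_count q n a x = cnt q n a x"
proof (induction n arbitrary: x)
  case 0
  have "{..<0::nat} \<rightarrow>\<^sub>E {0, 1::int} = {\<lambda>_. undefined}" by simp
  then show ?case unfolding sol_count_def by (auto simp: cong_sym_eq)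
next
  case (Suc n)
  then show ?case by (simp add: sol_count_Suc)
qed


lemma cnt_cong: "[x = y] (mod int q) \<Longrightarrow> cnt q n a x = cnt q n a y"
proof (induction n arbitrary: x y)
  case 0
  then have "[0 = x] (mod int q) \<longleftrightarrow> [0 = y] (mod int q)"
    using cong_trans[of 0 x "int q" y] cong_trans[of 0 y "int q" x] cong_sym[of x y "int q"] by blast
  then show ?case by simp
next
  case (Suc n)
  have "[x - a n = y - a n] (mod int q)" using Suc.prems by (simp add: cong_diff)
  then show ?case using Suc by simp
qed

lemma cnt_total:
  assumes "q \<ge> 1" "finite A" "card A = q" "inj_on (\<lambda>x. x mod int q) A"
  shows "(\<Sum>x\<in>A. cnt q n a x) = 2 ^ n"
  using assms(2-4)
proof (induction n arbitrary: A)
  case 0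
  have "(\<lambda>x. x mod int q) ` A \<subseteq> {0..<int q}" using assms(1) by auto
  moreover have "card ((\<lambda>x. x mod int q) ` A) = card {0..<int q}"
    using 0 by (simp add: card_image)
  ultimately have im: "(\<lambda>x. x mod int q) ` A = {0..<int q}"
    by (rule card_subset_eq[OF finite_atLeastLessThan_int])
  have "(0::int) \<in> {0..<int q}" using assms(1) by simp
  then have "(0::int) \<in> (\<lambda>x. x mod int q) ` A" using im by simp
  then obtain x0 where x0: "x0 \<in> A" "x0 mod int q = 0" by (metis imageE)
  have "(\<Sum>x\<in>A. cnt q 0 a x) = (\<Sum>x\<in>A. if x = x0 then 1 else 0)"
  proof (rule sum.cong)
    fix x assume x: "x \<in> A"
    have "[0 = x] (mod int q) \<longleftrightarrow> x mod int q = 0" unfolding cong_def by auto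
    also have "\<dots> \<longleftrightarrow> x = x0" using inj_on_eq_iff[OF 0(3) x x0(1)] x0(2) by simp
    finally show "cnt q 0 a x = (if x = x0 then 1 else 0)" by simp
  qed simp
  also have "\<dots> = 1" using x0 0(1) by simp
  finally show ?case by simp
next
  case (Suc n)
  define B where "B = (\<lambda>x. x - a n) ` A"
  have inj1: "inj_on (\<lambda>x. x - a n) A" by (simp add: inj_on_def)
  have "finite B" "card B = q" using Suc.prems inj1 unfolding B_def by (auto simp: card_image)
  moreover have "inj_on (\<lambda>x. x mod int q) B"
  proof (rule inj_onI)
    fix x y assume "x \<in> B" "y \<in> B" "x mod int q = y mod int q"
    then obtain x' y' where "x' \<in> A" "y' \<in> A" "x = x' - a n" "y = y' - a n" unfolding B_def by auto
    moreover have "x' mod int q = y' mod int q"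
      using \<open>x mod int q = y mod int q\<close> calculation(3,4) by (simp add: mod_eq_dvd_iff)
    ultimately show "x = y" using inj_on_eq_iff[OF Suc.prems(3)] by simp
  qed
  ultimately have "(\<Sum>x\<in>B. cnt q n a x) = 2 ^ n" using Suc.IH by blast
  moreover have "(\<Sum>x\<in>B. cnt q n a x) = (\<Sum>x\<in>A. cnt q n a (x - a n))"
    unfolding B_def using inj1 by (simp add: sum.reindex)
  ultimately show ?case using Suc by (simp add: sum.distrib)
qed

lemma binom_mod_alt: "binom_mod n s q = (\<Sum>j\<le>n. if [int j = s] (mod int q) then n choose j else 0)"
proof -
  have "{j. j \<le> n \<and> [int j = s] (mod int q)} = {j \<in> {..n}. [int j = s] (mod int q)}" by auto
  then show ?thesis unfolding binom_mod_def by (simp only:) (rule sum.inter_filter, simp)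
qed

lemma cnt_one: "cnt q n (\<lambda>_. 1) s = binom_mod n s q"
proof (induction n arbitrary: s)
  case 0
  then show ?case by (simp add: binom_mod_alt)
next
  case (Suc n)
  define F where "F = (\<lambda>m j. if [int j = s] (mod int q) then m choose j else 0)"
  have P: "[int (Suc j) = s] (mod int q) \<longleftrightarrow> [int j = s - 1] (mod int q)" for j
    by (simp add: cong_iff_dvd_diff algebra_simps)
  have "binom_mod (Suc n) s q = F (Suc n) 0 + (\<Sum>j\<le>n. F (Suc n) (Suc j))"
    unfolding binom_mod_alt F_def by (rule sum.atMost_Suc_shift)
  also have "(\<Sum>j\<le>n. F (Suc n) (Suc j)) = (\<Sum>j\<le>n. F n (Suc j)) + (\<Sum>j\<le>n. if [int j = s - 1] (mod int q) then n choose j else 0)"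
  proof -
    have "F (Suc n) (Suc j) = F n (Suc j) + (if [int j = s - 1] (mod int q) then n choose j else 0)" for j
      unfolding F_def using P[of j] by auto
    then show ?thesis by (simp add: sum.distrib[symmetric])
  qed
  also have "(\<Sum>j\<le>n. if [int j = s - 1] (mod int q) then n choose j else 0) = binom_mod n (s-1) q"
    by (simp add: binom_mod_alt)
  also have "F (Suc n) 0 = F n 0" unfolding F_def by simp
  also have "F n 0 + ((\<Sum>j\<le>n. F n (Suc j)) + binom_mod n (s - 1) q) = (F n 0 + (\<Sum>j\<le>n. F n (Suc j))) + binom_mod n (s - 1) q" by simp
  also have "F n 0 + (\<Sum>j\<le>n. F n (Suc j)) = (\<Sum>j\<le>Suc n. F n j)" by (rule sum.atMost_Suc_shift[symmetric])
  also have "\<dots> = (\<Sum>j\<le>n. F n j)" unfolding F_def by simp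
  also have "\<dots> = binom_mod n s q" unfolding F_def binom_mod_alt by simp
  finally show ?case using Suc.IH by simp
qed


definition cc :: "nat \<Rightarrow> nat \<Rightarrow> int" where
  "cc n j = (int n - int j + 2) div 2"

definition W :: "nat \<Rightarrow> nat \<Rightarrow> nat \<Rightarrow> nat" where
  "W q n j = (\<Sum>r\<in>{cc n j .. cc n j + int j - 1}. cnt q n (\<lambda>_. 1) r)"

lemma sum_shift1: "(\<Sum>r\<in>{lo..hi::int}. f (r - 1)) = (\<Sum>r\<in>{lo-1..hi-1}. f r)"
proof -
  have "(\<lambda>r. r - 1) ` {lo..hi} = {lo-1..hi-1}"
    by (auto simp: image_iff intro!: bexI[where x="_ + 1"])
  moreover have "inj_on (\<lambda>r::int. r - 1) {lo..hi}" by (simp add: inj_on_def)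
  ultimately show ?thesis using sum.reindex[of "\<lambda>r::int. r - 1" "{lo..hi}" f] by (simp add: comp_def)
qed

lemma W_rec:
  assumes "j \<ge> 1"
  shows "W q (Suc n) j = W q n (j - 1) + W q n (j + 1)"
proof -
  define c where "c = cc (Suc n) j"
  define f where "f = cnt q n (\<lambda>_. 1)"
  have c1: "cc n (j - 1) = c" unfolding c_def cc_def using assms by (simp add: of_nat_diff)
  have c2: "cc n (j + 1) = c - 1" unfolding c_def cc_def by simp
  have X: "W q (Suc n) j = (\<Sum>r\<in>{c..c + int j - 1}. f r) + (\<Sum>r\<in>{c..c + int j - 1}. f (r - 1))"
    unfolding W_def c_def f_def by (simp add: sum.distrib)
  have Y: "(\<Sum>r\<in>{c..c + int j - 1}. f (r - 1)) = (\<Sum>r\<in>{c - 1..c + int j - 2}. f r)"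
    by (simp add: sum_shift1)
  have s1: "{c..c + int j - 1} = insert (c + int j - 1) {c..c + int j - 2}" using assms by auto
  have s2: "{c - 1..c + int j - 2} = insert (c - 1) {c..c + int j - 2}" using assms by auto
  have s3: "{c - 1..c + int j - 1} = insert (c - 1) (insert (c + int j - 1) {c..c + int j - 2})" using assms by auto
  have W1: "W q n (j - 1) = (\<Sum>r\<in>{c..c + int j - 2}. f r)"
    unfolding W_def c1 f_def using assms by (simp add: of_nat_diff)
  have W2: "W q n (j + 1) = (\<Sum>r\<in>{c - 1..c + int j - 1}. f r)"
    unfolding W_def c2 f_def by (simp add: algebra_simps)
  have "W q (Suc n) j = (\<Sum>r\<in>{c..c + int j - 1}. f r) + (\<Sum>r\<in>{c - 1..c + int j - 2}. f r)"
    using X Y by simp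
  then show ?thesis unfolding W1 W2 s1 s2 s3 using assms by simp
qed

lemma interval_inj:
  assumes "q \<ge> 1"
  shows "inj_on (\<lambda>x. x mod int q) {c..c + int q - 1}"
proof (rule inj_onI)
  fix x y assume xy: "x \<in> {c..c + int q - 1}" "y \<in> {c..c + int q - 1}" "x mod int q = y mod int q"
  then have d: "int q dvd x - y" by (simp add: mod_eq_dvd_iff)
  show "x = y"
  proof (rule ccontr)
    assume "x \<noteq> y"
    then have "\<bar>int q\<bar> \<le> \<bar>x - y\<bar>" using d dvd_imp_le_int[of "x - y" "int q"] by simp
    then show False using xy by auto
  qed
qed

lemma W_full: "q \<ge> 1 \<Longrightarrow> W q n q = 2 ^ n"
  unfolding W_def by (rule cnt_total) (auto intro: interval_inj)


lemma not_invariant: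
  assumes q: "q \<ge> 1" and cop: "coprime u (int q)" and A: "A \<subseteq> {0..<int q}" "A \<noteq> {}"
    and eq: "(\<lambda>x. (x - u) mod int q) ` A = A"
  shows "A = {0..<int q}"
proof -
  have cl: "(x - int k * u) mod int q \<in> A" if "x \<in> A" for x k
  proof (induction k)
    case 0
    then show ?case using that A by auto
  next
    case (Suc k)
    have "((x - int k * u) mod int q - u) mod int q \<in> A"
      using imageI[OF Suc, of "\<lambda>x. (x - u) mod int q"] unfolding eq .
    moreover have "((x - int k * u) mod int q - u) mod int q = (x - int (Suc k) * u) mod int q"
      by (simp add: mod_diff_left_eq algebra_simps)
    ultimately show ?case by simp
  qed
  obtain x0 where x0: "x0 \<in> A" using A by auto
  obtain v where v: "[u * v = 1] (mod int q)" using cong_solve_coprime_int[OF cop] by auto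
  have "y \<in> A" if y: "y \<in> {0..<int q}" for y
  proof -
    define k where "k = nat ((v * (x0 - y)) mod int q)"
    have k: "int k = (v * (x0 - y)) mod int q" unfolding k_def using q by simp
    have "[int k = v * (x0 - y)] (mod int q)" unfolding k by (simp add: cong_def)
    then have "[int k * u = v * (x0 - y) * u] (mod int q)" by (simp add: cong_mult)
    moreover have "[v * (x0 - y) * u = 1 * (x0 - y)] (mod int q)"
    proof -
      have "[(u * v) * (x0 - y) = 1 * (x0 - y)] (mod int q)" using cong_mult[OF v cong_refl[of "x0 - y"]] .
      then show ?thesis by (simp add: algebra_simps)
    qed
    ultimately have "[int k * u = x0 - y] (mod int q)" by (simp add: cong_trans)
    then have "[x0 - int k * u = x0 - (x0 - y)] (mod int q)" by (intro cong_diff cong_refl)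
    then have "(x0 - int k * u) mod int q = y mod int q" by (simp add: cong_def)
    also have "\<dots> = y" using y by simp
    finally show ?thesis using cl[OF x0, of k] by simp
  qed
  then show ?thesis using A by auto
qed

lemma main:
  assumes "q \<ge> 1" "\<forall>i<n. coprime (a i) (int q)" "A \<subseteq> {0..<int q}"
  shows "(\<Sum>x\<in>A. cnt q n a x) \<le> W q n (card A)"
  using assms(2,3)
proof (induction n arbitrary: A)
  case 0
  have fA: "finite A" using 0 finite_subset by blast
  show ?case
  proof (cases "A = {}")
    case True
    then show ?thesis by simp
  next
    case False
    then have j: "card A \<ge> 1" using fA by (simp add: Suc_le_eq card_gt_0_iff)
    have "(\<Sum>x\<in>A. cnt q 0 a x) \<le> (\<Sum>x\<in>{0::int}. cnt q 0 a x)"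
    proof -
      have "(\<Sum>x\<in>A. cnt q 0 a x) = (\<Sum>x\<in>A \<inter> {0}. cnt q 0 a x)"
      proof (rule sum.mono_neutral_right)
        show "\<forall>i\<in>A - A \<inter> {0}. cnt q 0 a i = 0"
        proof
          fix i assume "i \<in> A - A \<inter> {0}"
          then have "i \<noteq> 0" "0 \<le> i" "i < int q" using 0 by auto
          then have "\<not> [0 = i] (mod int q)" by (simp add: cong_def)
          then show "cnt q 0 a i = 0" by simp
        qed
      qed (use fA in auto)
      also have "\<dots> \<le> (\<Sum>x\<in>{0::int}. cnt q 0 a x)" by (rule sum_mono2) auto
      finally show ?thesis .
    qed
    also have "\<dots> = 1" by simp
    also have "1 \<le> W q 0 (card A)"
    proof -
      have "0 \<in> {cc 0 (card A) .. cc 0 (card A) + int (card A) - 1}"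
        using j unfolding cc_def by auto
      then have "cnt q 0 (\<lambda>_. 1) 0 \<le> W q 0 (card A)" unfolding W_def
        by (intro member_le_sum) auto
      then show ?thesis by simp
    qed
    finally show ?thesis .
  qed
next
  case (Suc n)
  define f where "f = cnt q n a"
  define u where "u = a n"
  have cop: "coprime u (int q)" using Suc.prems u_def by simp
  have IH: "\<And>B. B \<subseteq> {0..<int q} \<Longrightarrow> sum f B \<le> W q n (card B)"
    using Suc f_def by simp
  have fA: "finite A" using Suc.prems finite_subset by blast
  define j where "j = card A"
  have jq: "j \<le> q" unfolding j_def using Suc.prems card_mono[of "{0..<int q}" A] by fastforce
  have lhs: "(\<Sum>x\<in>A. cnt q (Suc n) a x) = sum f A + (\<Sum>x\<in>A. f (x - u))"
    unfolding f_def u_def by (simp add: sum.distrib)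
  show ?case
  proof (cases "j = 0")
    case True
    then show ?thesis using fA j_def by simp
  next
    case j0: False
    show ?thesis
    proof (cases "j = q")
      case True
      then have AA: "A = {0..<int q}" using Suc.prems j_def
        by (intro card_subset_eq[OF finite_atLeastLessThan_int]) auto
      have "(\<Sum>x\<in>A. cnt q (Suc n) a x) = 2 ^ Suc n"
        unfolding AA by (rule cnt_total) (use assms(1) in \<open>auto simp: inj_on_def\<close>)
      also have "\<dots> = W q (Suc n) (card A)" using True j_def W_full assms(1) by simp
      finally show ?thesis by simp
    next
      case False
      then have jq1: "j < q" using jq by simp
      define A' where "A' = (\<lambda>x. (x - u) mod int q) ` A"
      have injA: "inj_on (\<lambda>x. (x - u) mod int q) A"
      proof (rule inj_onI)
        fix x y assume xy: "x \<in> A" "y \<in> A" "(x - u) mod int q = (y - u) mod int q"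
        then have "x mod int q = y mod int q" by (simp add: mod_eq_dvd_iff)
        moreover have "x \<in> {0..<int q}" "y \<in> {0..<int q}" using xy Suc.prems(2) by auto
        ultimately show "x = y" by simp
      qed
      have cA': "card A' = j" unfolding A'_def j_def using injA by (simp add: card_image)
      have A'sub: "A' \<subseteq> {0..<int q}" unfolding A'_def using assms(1) by auto
      have fA': "finite A'" using A'sub finite_subset by blast
      have sA': "sum f A' = (\<Sum>x\<in>A. f (x - u))"
      proof -
        have "sum f A' = (\<Sum>x\<in>A. f ((x - u) mod int q))"
          unfolding A'_def using injA by (simp add: sum.reindex)
        also have "\<dots> = (\<Sum>x\<in>A. f (x - u))"
          unfolding f_def by (intro sum.cong refl cnt_cong) (simp add: cong_def)
        finally show ?thesis .
      qed
      have neq: "A' \<noteq> A"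
      proof
        assume "A' = A"
        moreover have "A \<noteq> {}" using j0 j_def by auto
        ultimately have "A = {0..<int q}" using not_invariant[OF assms(1) cop Suc.prems(2)]
          unfolding A'_def by blast
        then show False using jq1 j_def by simp
      qed
      define B where "B = A \<inter> A'"
      define C where "C = A \<union> A'"
      have fB: "finite B" "finite C" unfolding B_def C_def using fA fA' by auto
      have BA': "B \<subset> A'"
      proof -
        have "B \<subseteq> A'" unfolding B_def by auto
        moreover have "B \<noteq> A'"
        proof
          assume "B = A'"
          then have "A' \<subseteq> A" unfolding B_def by auto
          then have "A' = A" using cA' j_def by (intro card_subset_eq[OF fA]) auto
          then show False using neq by simp
        qed
        ultimately show ?thesis by auto
      qed
      have cB: "card B < j" using psubset_card_mono[OF fA' BA'] cA' by simp
      have cC: "card C + card B = 2 * j" unfolding B_def C_def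
        using card_Un_Int[OF fA fA'] cA' j_def by simp
      have sumBC: "sum f A + sum f A' = sum f B + sum f C"
        unfolding B_def C_def using sum.union_inter[OF fA fA', of f] by simp
      define t where "t = j - 1 - card B"
      have "card (C - B) = card C - card B"
        using fB by (intro card_Diff_subset) (auto simp: B_def C_def)
      then have "t \<le> card (C - B)" unfolding t_def using cC cB by simp
      then obtain T where T: "T \<subseteq> C - B" "card T = t" "finite T"
        by (rule obtain_subset_with_card_n)
      define B' where "B' = B \<union> T"
      define C' where "C' = C - T"
      have "card B' = card B + card T" unfolding B'_def using T fB
        by (intro card_Un_disjoint) auto
      then have cB': "card B' = j - 1" using T(2) t_def cB by simp
      have "card C' = card C - card T" unfolding C'_def using T fB
        by (intro card_Diff_subset) auto
      then have cC': "card C' = j + 1" using T(2) t_def cB cC by simp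
      have "sum f B + sum f C = sum f B' + sum f C'"
      proof -
        have "sum f C = sum f T + sum f C'" using T fB
        proof -
          have "T \<subseteq> C" using T(1) by blast
          then show ?thesis using sum.subset_diff[of T C f] fB(2) by (simp add: add.commute C'_def)
        qed
        moreover have "sum f B' = sum f B + sum f T" unfolding B'_def using T fB
          by (subst sum.union_disjoint) auto
        ultimately show ?thesis by simp
      qed
      moreover have "sum f B' \<le> W q n (j - 1)"
        using IH[of B'] cB' T Suc.prems A'sub unfolding B'_def B_def C_def by auto
      moreover have "sum f C' \<le> W q n (j + 1)"
        using IH[of C'] cC' Suc.prems A'sub unfolding C'_def C_def by auto
      ultimately have "(\<Sum>x\<in>A. cnt q (Suc n) a x) \<le> W q n (j - 1) + W q n (j + 1)"
        using lhs sA' sumBC by simp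
      also have "\<dots> = W q (Suc n) j" using W_rec j0 by simp
      finally show ?thesis using j_def by simp
    qed
  qed
qed


lemma ceil_half: "\<lceil>(real n - real q) / 2\<rceil> = (int n - int q + 1) div 2"
proof -
  have "(real n - real q) / 2 = - (of_int (int q - int n) / of_int 2)" by (simp add: field_simps)
  then have "\<lceil>(real n - real q) / 2\<rceil> = - ((int q - int n) div 2)"
    by (simp only: ceiling_def floor_divide_of_int_eq minus_minus)
  also have "\<dots> = (int n - int q + 1) div 2" by presburger
  finally show ?thesis .
qed

lemma lower:
  assumes q: "q \<ge> 1" and cop: "\<forall>i<n. coprime (a i) (int q)"
  shows "sol_count q n a \<rho> \<ge> binom_mod n ((int n - int q + 1) div 2) q"
proof -
  define r0 where "r0 = \<rho> mod int q"
  have r0: "r0 \<in> {0..<int q}" unfolding r0_def using q by simp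
  define A where "A = {0..<int q} - {r0}"
  have cA: "card A = q - 1" unfolding A_def using r0 by simp
  have m: "(\<Sum>x\<in>A. cnt q n a x) \<le> W q n (q - 1)"
    using main[OF q cop, of A] cA unfolding A_def by auto
  have tot: "(\<Sum>x\<in>{0..<int q}. cnt q n a x) = 2 ^ n"
    by (rule cnt_total) (use q in \<open>auto simp: inj_on_def\<close>)
  have "(\<Sum>x\<in>{0..<int q}. cnt q n a x) = cnt q n a r0 + (\<Sum>x\<in>A. cnt q n a x)"
    unfolding A_def using r0 by (simp add: sum.remove)
  then have e1: "cnt q n a r0 + (\<Sum>x\<in>A. cnt q n a x) = 2 ^ n" using tot by simp
  define c where "c = cc n (q - 1)"
  have cq: "int (q - 1) = int q - 1" using q by simp
  have tot2: "(\<Sum>x\<in>{c - 1..c - 1 + int q - 1}. cnt q n (\<lambda>_. 1) x) = 2 ^ n"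
    by (rule cnt_total) (use q interval_inj[OF q, of "c - 1"] in auto)
  have "{c - 1..c - 1 + int q - 1} = insert (c - 1) {c..c + int (q - 1) - 1}" using cq q by auto
  then have "(\<Sum>x\<in>{c - 1..c - 1 + int q - 1}. cnt q n (\<lambda>_. 1) x) = cnt q n (\<lambda>_. 1) (c - 1) + W q n (q - 1)"
    unfolding W_def c_def by simp
  then have e2: "cnt q n (\<lambda>_. 1) (c - 1) + W q n (q - 1) = 2 ^ n" using tot2 by simp
  have L1: "cnt q n a r0 \<ge> cnt q n (\<lambda>_. 1) (c - 1)" using e1 e2 m by linarith
  have L2: "cnt q n a r0 = sol_count q n a \<rho>"
    unfolding sol_count_cnt r0_def by (rule cnt_cong) (simp add: cong_def)
  have L3: "c - 1 = (int n - int q + 1) div 2" unfolding c_def cc_def using cq by simp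
  have L4: "cnt q n (\<lambda>_. 1) (c - 1) = binom_mod n (c - 1) q" by (rule cnt_one)
  have L5: "binom_mod n ((int n - int q + 1) div 2) q = binom_mod n (c - 1) q" by (simp only: L3)
  show ?thesis unfolding L5 L4[symmetric] L2[symmetric] by (rule L1)
qed

theorem corollary2:
  fixes q n :: nat
  assumes "q \<ge> 1" and "n + 1 \<ge> q"
  shows "(\<forall>(a :: nat \<Rightarrow> int) (\<rho> :: int). (\<forall>i<n. coprime (a i) (int q)) \<longrightarrow>
            sol_count q n a \<rho> \<ge> binom_mod n \<lceil>(real n - real q) / 2\<rceil> q)
       \<and> (\<exists>(a :: nat \<Rightarrow> int) (\<rho> :: int). (\<forall>i<n. coprime (a i) (int q)) \<and>
            sol_count q n a \<rho> = binom_mod n \<lceil>(real n - real q) / 2\<rceil> q)"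
proof
  show "\<forall>(a :: nat \<Rightarrow> int) (\<rho> :: int). (\<forall>i<n. coprime (a i) (int q)) \<longrightarrow>
            sol_count q n a \<rho> \<ge> binom_mod n \<lceil>(real n - real q) / 2\<rceil> q"
  proof (intro allI impI)
    fix a :: "nat \<Rightarrow> int" and \<rho> :: int
    assume h: "\<forall>i<n. coprime (a i) (int q)"
    show "sol_count q n a \<rho> \<ge> binom_mod n \<lceil>(real n - real q) / 2\<rceil> q"
      unfolding ceil_half by (rule lower[OF assms(1) h])
  qed
  show "\<exists>(a :: nat \<Rightarrow> int) (\<rho> :: int). (\<forall>i<n. coprime (a i) (int q)) \<and>
            sol_count q n a \<rho> = binom_mod n \<lceil>(real n - real q) / 2\<rceil> q"
  proof (intro exI conjI)
    show "\<forall>i<n. coprime ((\<lambda>_. 1::int) i) (int q)" by simp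
    show "sol_count q n (\<lambda>_. 1) \<lceil>(real n - real q) / 2\<rceil> = binom_mod n \<lceil>(real n - real q) / 2\<rceil> q"
      unfolding sol_count_cnt by (rule cnt_one)
  qed
qed

end
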